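(* Let $\mathcal C$ be an uncountable algebraically closed field of characteristic zero and $p\ge2$ an integer. Let $X\subset GL_n(\mathcal C)$ be the Zariski closed set of all $v$ satisfying: (1) $(v^m)^{(p)}=(v^{(p)})^m$ for all $m\ge0$, and (2) $(v^m)^{(p)}(v^{-m})^{(p)}=1$ for all $m\ge0$ (equalities in $\mathfrak{gl}_n(\mathcal C)$). Then $X$ has exactly one irreducible component passing through $1$, and that component is the group $T$ of diagonal matrices in $GL_n(\mathcal C)$.
   Context: For a matrix $v=(v_{ij})$, $v^{(p)}=(v_{ij}^p)$ denotes the entrywise $p$-th power. *)

theory Defs
  imports "HOL-Analysis.Analysis" "HOL-Computational_Algebra.Polynomial"
begin

text \<open>Matrices in gl_n(C) are 'a^'n^'n with a finite index type 'n (n = CARD('n)).\<close>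

type_synonym ('a, 'n) sqmat = "'a ^ 'n ^ 'n"

primrec mpow :: "('a::semiring_1) ^'n^'n \<Rightarrow> nat \<Rightarrow> 'a^'n^'n" where
  "mpow v 0 = mat 1"
| "mpow v (Suc m) = v ** mpow v m"

definition epow :: "('a::semiring_1) ^'n^'n \<Rightarrow> nat \<Rightarrow> 'a^'n^'n" where
  "epow v p = (\<chi> i j. (v $ i $ j) ^ p)"

definition GL :: "('a::field ^'n^'n) set" where
  "GL = {v. invertible v}"

inductive_set poly_fun :: "(('a::field) ^'n^'n \<Rightarrow> 'a) set" where
  const: "(\<lambda>v. c) \<in> poly_fun"
| entry: "(\<lambda>v. v $ i $ j) \<in> poly_fun"
| add: "f \<in> poly_fun \<Longrightarrow> g \<in> poly_fun \<Longrightarrow> (\<lambda>v. f v + g v) \<in> poly_fun"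
| mult: "f \<in> poly_fun \<Longrightarrow> g \<in> poly_fun \<Longrightarrow> (\<lambda>v. f v * g v) \<in> poly_fun"

text \<open>Zariski closed subsets of GL_n: common zero loci in GL_n of families of polynomial
  functions in the entries (regular functions on GL_n are such polynomials divided by
  powers of det, which does not change zero loci on GL_n).\<close>
definition zariski_closed_GL :: "('a::field ^'n^'n) set \<Rightarrow> bool" where
  "zariski_closed_GL Z \<longleftrightarrow> (\<exists>S \<subseteq> poly_fun. Z = {v \<in> GL. \<forall>f\<in>S. f v = 0})"

definition zariski_irreducible :: "('a::field ^'n^'n) set \<Rightarrow> bool" where
  "zariski_irreducible Y \<longleftrightarrow> Y \<subseteq> GL \<and> Y \<noteq> {} \<and>
     (\<forall>A B. zariski_closed_GL A \<longrightarrow> zariski_closed_GL B \<longrightarrow> Y \<subseteq> A \<union> B \<longrightarrow> Y \<subseteq> A \<or> Y \<subseteq> B)"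

definition irreducible_component :: "('a::field ^'n^'n) set \<Rightarrow> ('a ^'n^'n) set \<Rightarrow> bool" where
  "irreducible_component X Z \<longleftrightarrow> Z \<subseteq> X \<and> zariski_irreducible Z \<and>
     (\<forall>Y. Y \<subseteq> X \<longrightarrow> zariski_irreducible Y \<longrightarrow> Z \<subseteq> Y \<longrightarrow> Y = Z)"

definition alg_closed :: "'a::field itself \<Rightarrow> bool" where
  "alg_closed _ \<longleftrightarrow> (\<forall>q :: 'a poly. degree q \<ge> 1 \<longrightarrow> (\<exists>x. poly q x = 0))"

definition Xset :: "nat \<Rightarrow> ('a::field ^'n^'n) set" where
  "Xset p = {v \<in> GL.
     (\<forall>m. epow (mpow v m) p = mpow (epow v p) m) \<and>
     (\<forall>m. epow (mpow v m) p ** epow (mpow (matrix_inv v) m) p = mat 1)}"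

definition diag_torus :: "('a::field ^'n^'n) set" where
  "diag_torus = {v \<in> GL. \<forall>i j. i \<noteq> j \<longrightarrow> v $ i $ j = 0}"

end

theory Submission
  imports Defs
begin

lemma pf_const: "(\<lambda>v. c) \<in> poly_fun" by (rule poly_fun.const)
lemma pf_entry: "(\<lambda>v. v $ i $ j) \<in> poly_fun" by (rule poly_fun.entry)
lemma pf_add: "f \<in> poly_fun \<Longrightarrow> g \<in> poly_fun \<Longrightarrow> (\<lambda>v. f v + g v) \<in> poly_fun" by (rule poly_fun.add)
lemma pf_mult: "f \<in> poly_fun \<Longrightarrow> g \<in> poly_fun \<Longrightarrow> (\<lambda>v. f v * g v) \<in> poly_fun" by (rule poly_fun.mult)
lemma pf_neg: "f \<in> poly_fun \<Longrightarrow> (\<lambda>v. - f v) \<in> poly_fun"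
  using pf_mult[OF pf_const[of "-1"]] by simp
lemma pf_diff: "f \<in> poly_fun \<Longrightarrow> g \<in> poly_fun \<Longrightarrow> (\<lambda>v. f v - g v) \<in> poly_fun"
  using pf_add[OF _ pf_neg] by simp
lemma pf_pow: "f \<in> poly_fun \<Longrightarrow> (\<lambda>v. f v ^ m) \<in> poly_fun"
  by (induction m) (auto intro: pf_const pf_mult)
lemma pf_sum: "finite A \<Longrightarrow> (\<And>x. x \<in> A \<Longrightarrow> f x \<in> poly_fun) \<Longrightarrow> (\<lambda>v. \<Sum>x\<in>A. f x v) \<in> poly_fun"
  by (induction A rule: finite_induct) (auto intro: pf_const pf_add)
lemma pf_prod: "finite A \<Longrightarrow> (\<And>x. x \<in> A \<Longrightarrow> f x \<in> poly_fun) \<Longrightarrow> (\<lambda>v. \<Prod>x\<in>A. f x v) \<in> poly_fun"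
  by (induction A rule: finite_induct) (auto intro: pf_const pf_mult)

definition mu :: "('n \<times> 'n) list \<Rightarrow> ('a::field)^'n^'n \<Rightarrow> 'a" where
  "mu L v = prod_list (map (\<lambda>(i,j). v $ i $ j) L)"

definition offd :: "('n \<times> 'n) list \<Rightarrow> bool" where
  "offd L \<longleftrightarrow> (\<forall>(i,j)\<in>set L. i \<noteq> j)"

definition JJ :: "nat \<Rightarrow> (('a::field)^'n^'n \<Rightarrow> 'a) set" where
  "JJ k = {f. \<exists>ps. (\<forall>(g,L)\<in>set ps. g \<in> poly_fun \<and> k \<le> length L \<and> offd L) \<and>
       f = (\<lambda>v. sum_list (map (\<lambda>(g,L). g v * mu L v) ps))}"

lemma mu_append: "mu (L @ L') v = mu L v * mu L' v"
  by (simp add: mu_def)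

lemma pf_mu: "(mu L :: 'a::field^'n^'n \<Rightarrow> 'a) \<in> poly_fun"
proof (induction L)
  case Nil then show ?case by (simp add: mu_def pf_const)
next
  case (Cons a L)
  obtain i j where a: "a = (i,j)" by force
  have "mu (a # L) = (\<lambda>v::'a^'n^'n. v $ i $ j * mu L v)" by (auto simp: mu_def a)
  then show ?case using pf_mult[OF pf_entry[of i j] Cons.IH] by simp
qed

lemma JJ_mono: "k \<le> k' \<Longrightarrow> f \<in> JJ k' \<Longrightarrow> f \<in> JJ k"
  unfolding JJ_def by fastforce

lemma JJ_zero: "(\<lambda>v. 0) \<in> JJ k"
  unfolding JJ_def by (rule CollectI, rule exI[of _ "[]"]) auto

lemma JJ_add: "f \<in> JJ k \<Longrightarrow> g \<in> JJ k \<Longrightarrow> (\<lambda>v. f v + g v) \<in> JJ k"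
  unfolding JJ_def
proof (elim CollectE exE conjE, intro CollectI)
  fix ps qs assume "\<forall>(g, L)\<in>set ps. g \<in> poly_fun \<and> k \<le> length L \<and> offd L"
    "f = (\<lambda>v. \<Sum>(g, L)\<leftarrow>ps. g v * mu L v)"
    "\<forall>(ga, L)\<in>set qs. ga \<in> poly_fun \<and> k \<le> length L \<and> offd L"
    "g = (\<lambda>v. \<Sum>(g, L)\<leftarrow>qs. g v * mu L v)"
  then show "\<exists>ps. (\<forall>(g, L)\<in>set ps. g \<in> poly_fun \<and> k \<le> length L \<and> offd L) \<and>
         (\<lambda>v. f v + g v) = (\<lambda>v. \<Sum>(g, L)\<leftarrow>ps. g v * mu L v)"
    by (intro exI[of _ "ps @ qs"]) auto
qed

lemma JJ_pmult: "h \<in> poly_fun \<Longrightarrow> f \<in> JJ k \<Longrightarrow> (\<lambda>v. h v * f v) \<in> JJ k"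
  unfolding JJ_def
proof (elim CollectE exE conjE, intro CollectI)
  fix ps assume h: "h \<in> poly_fun" and ps: "\<forall>(g, L)\<in>set ps. g \<in> poly_fun \<and> k \<le> length L \<and> offd L"
    and f: "f = (\<lambda>v. \<Sum>(g, L)\<leftarrow>ps. g v * mu L v)"
  have "(\<lambda>v. h v * f v) = (\<lambda>v. \<Sum>(g, L)\<leftarrow>map (\<lambda>(g,L). (\<lambda>v. h v * g v, L)) ps. g v * mu L v)"
    unfolding f by (rule ext, induction ps) (auto simp: algebra_simps)
  moreover have "\<forall>(g, L)\<in>set (map (\<lambda>(g,L). (\<lambda>v. h v * g v, L)) ps). g \<in> poly_fun \<and> k \<le> length L \<and> offd L"
    using ps h by (auto intro: pf_mult)
  ultimately show "\<exists>ps. (\<forall>(g, L)\<in>set ps. g \<in> poly_fun \<and> k \<le> length L \<and> offd L) \<and>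
         (\<lambda>v. h v * f v) = (\<lambda>v. \<Sum>(g, L)\<leftarrow>ps. g v * mu L v)" by blast
qed

lemma JJ_neg: "f \<in> JJ k \<Longrightarrow> (\<lambda>v. - f v) \<in> JJ k"
  using JJ_pmult[OF pf_const[of "-1"]] by simp
lemma JJ_diff: "f \<in> JJ k \<Longrightarrow> g \<in> JJ k \<Longrightarrow> (\<lambda>v. f v - g v) \<in> JJ k"
  using JJ_add[OF _ JJ_neg] by simp

lemma JJ_sum: "finite A \<Longrightarrow> (\<And>x. x \<in> A \<Longrightarrow> f x \<in> JJ k) \<Longrightarrow> (\<lambda>v. \<Sum>x\<in>A. f x v) \<in> JJ k"
  by (induction A rule: finite_induct) (auto intro: JJ_zero JJ_add)

lemma JJ_mu: "offd L \<Longrightarrow> mu L \<in> JJ (length L)"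
  unfolding JJ_def by (rule CollectI, rule exI[of _ "[(\<lambda>v. 1, L)]"]) (auto intro: pf_const)

lemma JJ_entry: "i \<noteq> j \<Longrightarrow> (\<lambda>v::'a::field^'n^'n. v $ i $ j) \<in> JJ 1"
proof -
  have "mu [(i,j)] = (\<lambda>v::'a^'n^'n. v $ i $ j)" by (auto simp: mu_def)
  moreover have "i \<noteq> j \<Longrightarrow> (mu [(i,j)] :: 'a^'n^'n \<Rightarrow> 'a) \<in> JJ (length [(i,j)])" by (rule JJ_mu) (simp add: offd_def)
  ultimately show "i \<noteq> j \<Longrightarrow> ?thesis" by simp
qed

lemma JJ_poly: "f \<in> poly_fun \<Longrightarrow> f \<in> JJ 0"
  using JJ_pmult[OF _ JJ_mu[of "[]"]] by (simp add: mu_def offd_def)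

lemma sum_list_concat': "sum_list (concat xss) = (\<Sum>xs\<leftarrow>xss. sum_list xs)"
  by (induction xss) auto

lemma sum_list_mult_both:
  "(\<Sum>x\<leftarrow>xs. f x) * (\<Sum>y\<leftarrow>ys. g y) = (\<Sum>x\<leftarrow>xs. \<Sum>y\<leftarrow>ys. (f x * g y :: 'a::comm_ring))"
  by (induction xs) (auto simp: algebra_simps sum_list_const_mult)

lemma JJ_mult: "f \<in> JJ a \<Longrightarrow> g \<in> JJ b \<Longrightarrow> (\<lambda>v. f v * g v) \<in> JJ (a + b)"
  unfolding JJ_def
proof (elim CollectE exE conjE, intro CollectI)
  fix ps qs assume ps: "\<forall>(g, L)\<in>set ps. g \<in> poly_fun \<and> a \<le> length L \<and> offd L"
    and f: "f = (\<lambda>v. \<Sum>(g, L)\<leftarrow>ps. g v * mu L v)"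
    and qs: "\<forall>(ga, L)\<in>set qs. ga \<in> poly_fun \<and> b \<le> length L \<and> offd L"
    and g: "g = (\<lambda>v. \<Sum>(g, L)\<leftarrow>qs. g v * mu L v)"
  define rs where "rs = concat (map (\<lambda>(g,L). map (\<lambda>(g',L'). (\<lambda>v. g v * g' v, L @ L')) qs) ps)"
  have "(\<lambda>v. f v * g v) = (\<lambda>v. \<Sum>(g, L)\<leftarrow>rs. g v * mu L v)"
  proof
    fix v
    have "f v * g v = (\<Sum>x\<leftarrow>ps. \<Sum>y\<leftarrow>qs. (case x of (g, L) \<Rightarrow> g v * mu L v) * (case y of (g, L) \<Rightarrow> g v * mu L v))"
      unfolding f g by (rule sum_list_mult_both)
    also have "\<dots> = (\<Sum>(g, L)\<leftarrow>rs. g v * mu L v)"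
      unfolding rs_def by (simp add: sum_list_concat' map_concat comp_def case_prod_beta mu_append mult_ac)
    finally show "f v * g v = (\<Sum>(g, L)\<leftarrow>rs. g v * mu L v)" .
  qed
  moreover have "\<forall>(g, L)\<in>set rs. g \<in> poly_fun \<and> a + b \<le> length L \<and> offd L"
    using ps qs unfolding rs_def by (fastforce intro: pf_mult simp: offd_def)
  ultimately show "\<exists>ps. (\<forall>(g, L)\<in>set ps. g \<in> poly_fun \<and> a + b \<le> length L \<and> offd L) \<and>
         (\<lambda>v. f v * g v) = (\<lambda>v. \<Sum>(g, L)\<leftarrow>ps. g v * mu L v)" by blast
qed

lemma JJ_pow: "f \<in> JJ a \<Longrightarrow> (\<lambda>v. f v ^ m) \<in> JJ (a * m)"
proof (induction m)
  case 0 then show ?case using JJ_poly[OF pf_const[of 1]] by simp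
next
  case (Suc m) then show ?case using JJ_mult[OF Suc.prems Suc.IH] by (simp add: add.commute)
qed

lemma JJ_powdiff:
  assumes A: "A \<in> JJ 1" and B: "B \<in> JJ 2"
  shows "(\<lambda>v. (A v + B v) ^ m - A v ^ m) \<in> JJ (Suc m)"
proof (induction m)
  case 0 then show ?case using JJ_zero by simp
next
  case (Suc m)
  have AB: "(\<lambda>v. A v + B v) \<in> JJ 1" using JJ_add[OF A JJ_mono[OF _ B]] by simp
  have 1: "(\<lambda>v. (A v + B v) * ((A v + B v) ^ m - A v ^ m)) \<in> JJ (Suc (Suc m))"
    using JJ_mult[OF AB Suc.IH] by simp
  have 2: "(\<lambda>v. B v * A v ^ m) \<in> JJ (Suc (Suc m))"
    using JJ_mult[OF B JJ_pow[OF A, of m]] by simp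
  have "(\<lambda>v. (A v + B v) ^ Suc m - A v ^ Suc m) = (\<lambda>v. (A v + B v) * ((A v + B v) ^ m - A v ^ m) + B v * A v ^ m)"
    by (rule ext) (simp add: algebra_simps)
  then show ?case using JJ_add[OF 1 2] by simp
qed

definition GG :: "nat \<Rightarrow> ('n::finite \<times> 'n) list set" where
  "GG K = {L. length L = K \<and> offd L}"

lemma GG_finite: "finite (GG K :: ('n::finite \<times> 'n) list set)"
proof -
  have sub: "GG K \<subseteq> {xs. set xs \<subseteq> UNIV \<and> length xs = K}" by (auto simp: GG_def)
  have "finite {xs::('n \<times> 'n) list. set xs \<subseteq> UNIV \<and> length xs = K}"
    by (rule finite_lists_length_eq) simp
  then show ?thesis using sub by (rule rev_finite_subset)
qed

lemma mu_one: "offd L \<Longrightarrow> L \<noteq> [] \<Longrightarrow> mu L (mat 1 :: 'a::field^'n^'n) = 0"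
proof (cases L)
  case (Cons a L')
  assume "offd L"
  then obtain i j where "a = (i,j)" "i \<noteq> j" using Cons by (cases a) (auto simp: offd_def)
  then show ?thesis using Cons by (simp add: mu_def mat_def)
qed simp

lemma JJ_rep:
  fixes f :: "'a::field^'n::finite^'n \<Rightarrow> 'a"
  assumes "f \<in> JJ (Suc K)"
  shows "\<exists>j. (\<forall>L\<in>GG K. j L \<in> poly_fun \<and> j L (mat 1) = 0) \<and> (\<forall>v. f v = (\<Sum>L\<in>GG K. j L v * mu L v))"
proof -
  obtain ps where ps: "\<forall>(g,L)\<in>set ps. g \<in> poly_fun \<and> Suc K \<le> length L \<and> offd L"
    and f: "f = (\<lambda>v. sum_list (map (\<lambda>(g,L). g v * mu L v) ps))"
    using assms unfolding JJ_def by blast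
  have "\<exists>j. (\<forall>L\<in>GG K. j L \<in> poly_fun \<and> j L (mat 1) = 0) \<and>
     (\<forall>v. sum_list (map (\<lambda>(g,L). g v * mu L v) ps) = (\<Sum>L\<in>GG K. j L v * mu L v))"
    using ps
  proof (induction ps)
    case Nil
    show ?case by (rule exI[of _ "\<lambda>L v. 0"]) (auto intro: pf_const)
  next
    case (Cons a ps)
    obtain g L where a: "a = (g, L)" by force
    from Cons obtain j where j: "\<forall>L\<in>GG K. j L \<in> poly_fun \<and> j L (mat 1) = 0"
      and js: "\<forall>v. sum_list (map (\<lambda>(g,L). g v * mu L v) ps) = (\<Sum>L\<in>GG K. j L v * mu L v)"
      by auto
    have g: "g \<in> poly_fun" and len: "Suc K \<le> length L" and off: "offd L" using Cons.prems a by auto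
    define L' where "L' = take K L"
    define R where "R = drop K L"
    have L'G: "L' \<in> GG K" using len off unfolding L'_def GG_def offd_def by (auto dest: in_set_takeD)
    have offR: "offd R" "R \<noteq> []" using off len unfolding R_def offd_def by (auto dest: in_set_dropD)
    have muL: "mu L v = mu L' v * mu R v" for v :: "'a^'n^'n"
      unfolding L'_def R_def by (metis append_take_drop_id mu_append)
    define j' where "j' = (\<lambda>M v. j M v + (if M = L' then g v * mu R v else 0))"
    have "\<forall>M\<in>GG K. j' M \<in> poly_fun \<and> j' M (mat 1) = 0"
      using j g pf_mu[of R] mu_one[OF offR] unfolding j'_def
      by (auto intro!: pf_add pf_mult pf_const)
    moreover have "\<forall>v. sum_list (map (\<lambda>(g,L). g v * mu L v) (a # ps)) = (\<Sum>M\<in>GG K. j' M v * mu M v)"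
    proof
      fix v :: "'a^'n^'n"
      have "(\<Sum>M\<in>GG K. j' M v * mu M v) = (\<Sum>M\<in>GG K. j M v * mu M v) +
          (\<Sum>M\<in>GG K. (if M = L' then g v * mu R v * mu M v else 0))"
      proof -
        have "(\<lambda>M. j' M v * mu M v) = (\<lambda>M. j M v * mu M v + (if M = L' then g v * mu R v * mu M v else 0))"
          unfolding j'_def by (auto simp: distrib_right)
        then show ?thesis by (simp only: sum.distrib)
      qed
      also have "\<dots> = (\<Sum>M\<in>GG K. j M v * mu M v) + g v * mu R v * mu L' v"
        using L'G by (subst sum.delta[OF GG_finite]) simp
      finally show "sum_list (map (\<lambda>(g,L). g v * mu L v) (a # ps)) = (\<Sum>M\<in>GG K. j' M v * mu M v)"
        using js a muL by (simp add: mult_ac)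
    qed
    ultimately show ?case by blast
  qed
  then show ?thesis unfolding f by simp
qed

lemma nakayama:
  fixes x0 :: "'a::field^'n^'n"
  assumes "finite G"
    and "\<forall>a\<in>G. \<forall>v\<in>X. c v * m a v = (\<Sum>b\<in>G. jj a b v * m b v)"
    and "c \<in> poly_fun" and "c x0 \<noteq> 0"
    and "\<forall>a\<in>G. \<forall>b\<in>G. jj a b \<in> poly_fun \<and> jj a b x0 = 0"
  shows "\<exists>h\<in>poly_fun. h x0 \<noteq> 0 \<and> (\<forall>a\<in>G. \<forall>v\<in>X. h v * m a v = 0)"
  using assms
proof (induction G arbitrary: c jj rule: finite_induct)
  case empty
  then show ?case by blast
next
  case (insert r G)
  define u where "u = (\<lambda>v. c v - jj r r v)"
  have u: "u \<in> poly_fun" "u x0 \<noteq> 0" using insert.prems unfolding u_def by (auto intro: pf_diff)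
  have er: "u v * m r v = (\<Sum>b\<in>G. jj r b v * m b v)" if "v \<in> X" for v
    using insert.prems(1) insert.hyps that unfolding u_def by (auto simp: algebra_simps)
  define c' where "c' = (\<lambda>v. u v * c v)"
  define jj' where "jj' = (\<lambda>a b v. u v * jj a b v + jj a r v * jj r b v)"
  have eq': "\<forall>a\<in>G. \<forall>v\<in>X. c' v * m a v = (\<Sum>b\<in>G. jj' a b v * m b v)"
  proof (intro ballI)
    fix a v assume a: "a \<in> G" and v: "v \<in> X"
    have "c v * m a v = (\<Sum>b\<in>G. jj a b v * m b v) + jj a r v * m r v"
      using insert.prems(1) insert.hyps a v by auto
    then have "c' v * m a v = u v * ((\<Sum>b\<in>G. jj a b v * m b v) + jj a r v * m r v)"
      unfolding c'_def by (simp add: mult.assoc)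
    also have "\<dots> = u v * (\<Sum>b\<in>G. jj a b v * m b v) + jj a r v * (u v * m r v)"
      by (simp add: algebra_simps)
    also have "\<dots> = (\<Sum>b\<in>G. jj' a b v * m b v)"
      unfolding er[OF v] jj'_def by (simp add: sum_distrib_left sum.distrib algebra_simps)
    finally show "c' v * m a v = (\<Sum>b\<in>G. jj' a b v * m b v)" .
  qed
  have "\<exists>h\<in>poly_fun. h x0 \<noteq> 0 \<and> (\<forall>a\<in>G. \<forall>v\<in>X. h v * m a v = 0)"
  proof (rule insert.IH[OF eq'])
    show "c' \<in> poly_fun" "c' x0 \<noteq> 0" using u insert.prems unfolding c'_def by (auto intro: pf_mult)
    show "\<forall>a\<in>G. \<forall>b\<in>G. jj' a b \<in> poly_fun \<and> jj' a b x0 = 0"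
      using u insert.prems unfolding jj'_def by (auto intro!: pf_mult pf_add)
  qed
  then obtain h where h: "h \<in> poly_fun" "h x0 \<noteq> 0" "\<forall>a\<in>G. \<forall>v\<in>X. h v * m a v = 0" by blast
  show ?case
  proof (intro bexI conjI ballI)
    show "(\<lambda>v. u v * h v) \<in> poly_fun" using u h by (auto intro: pf_mult)
    show "u x0 * h x0 \<noteq> 0" using u h by simp
    fix a v assume a: "a \<in> insert r G" and v: "v \<in> X"
    show "u v * h v * m a v = 0"
    proof (cases "a = r")
      case True
      have "h v * (u v * m r v) = (\<Sum>b\<in>G. jj r b v * (h v * m b v))"
        unfolding er[OF v] by (simp add: sum_distrib_left mult_ac)
      also have "\<dots> = 0" using h v by (auto intro!: sum.neutral)
      finally show ?thesis using True by (simp add: mult_ac)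
    next
      case False then show ?thesis using a h v by simp
    qed
  qed
qed

definition ent :: "'n \<times> 'n \<Rightarrow> ('a::field)^'n^'n \<Rightarrow> 'a" where
  "ent x v = v $ fst x $ snd x"

lemma mu_remove1: "x \<in> set L \<Longrightarrow> mu L v = ent x v * mu (remove1 x L) v"
  by (induction L) (auto simp: mu_def ent_def case_prod_beta)

lemma mu_extract:
  fixes L :: "('n::finite \<times> 'n) list" and x :: "'n \<times> 'n"
  shows
  "k \<le> count_list L x \<Longrightarrow> \<exists>L''. length L'' = length L - k \<and> set L'' \<subseteq> set L \<and>
      (\<forall>v::'a::field^'n^'n. mu L v = ent x v ^ k * mu L'' v)"
proof (induction k arbitrary: L)
  case 0 then show ?case by (intro exI[of _ L]) auto
next
  case (Suc k)
  then have xL: "x \<in> set L" using count_list_0_iff[of L x] by auto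
  have "k \<le> count_list (remove1 x L) x" using Suc.prems xL by simp
  from Suc.IH[OF this] obtain L'' where L'': "length L'' = length (remove1 x L) - k"
    "set L'' \<subseteq> set (remove1 x L)" "\<forall>v::'a^'n^'n. mu (remove1 x L) v = ent x v ^ k * mu L'' v" by blast
  show ?case
  proof (intro exI conjI allI)
    show "length L'' = length L - Suc k" using L'' xL by (simp add: length_remove1)
    show "set L'' \<subseteq> set L" using L''(2) set_remove1_subset by fastforce
    fix v :: "'a^'n^'n" show "mu L v = ent x v ^ Suc k * mu L'' v"
      using mu_remove1[OF xL, of v] L''(3) by simp
  qed
qed

lemma pigeon:
  fixes L :: "('n::finite \<times> 'n) list"
  assumes "length L = card {x::'n::finite \<times> 'n. fst x \<noteq> snd x} * (p - 1) + 1" "offd L" "p \<ge> 1"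
  shows "\<exists>x. fst x \<noteq> snd x \<and> p \<le> count_list L x"
proof (rule ccontr)
  let ?O = "{x::'n \<times> 'n. fst x \<noteq> snd x}"
  assume "\<not> ?thesis"
  then have le: "\<forall>x\<in>?O. count_list L x \<le> p - 1" by force
  have "set L \<subseteq> ?O" using assms(2) by (auto simp: offd_def)
  then have "length L = sum (count_list L) ?O" by (simp add: sum_count_set)
  also have "\<dots> \<le> (\<Sum>x\<in>?O. p - 1)" using le by (intro sum_mono) auto
  also have "\<dots> = card ?O * (p - 1)" by simp
  finally show False using assms(1) by simp
qed

lemma sum_split2:
  fixes f :: "'n::finite \<Rightarrow> 'a::comm_monoid_add"
  assumes "i \<noteq> j"
  shows "sum f UNIV = f i + f j + sum f (UNIV - {i,j})"
proof -
  have "sum f UNIV = f i + sum f (UNIV - {i})" by (simp add: sum.remove)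
  also have "sum f (UNIV - {i}) = f j + sum f (UNIV - {i} - {j})" using assms by (simp add: sum.remove)
  also have "UNIV - {i} - {j} = UNIV - {i,j}" by auto
  finally show ?thesis by (simp add: add.assoc)
qed

definition cf :: "'n \<times> 'n \<Rightarrow> nat \<Rightarrow> ('a::field)^'n^'n \<Rightarrow> 'a" where
  "cf x p v = (v $ fst x $ fst x + v $ snd x $ snd x) ^ p - (v $ fst x $ fst x) ^ p - (v $ snd x $ snd x) ^ p"

definition RR :: "'n::finite \<times> 'n \<Rightarrow> nat \<Rightarrow> ('a::field)^'n^'n \<Rightarrow> 'a" where
  "RR x p v = (let i = fst x; j = snd x; d = v $ i $ i + v $ j $ j;
     q = (\<Sum>k\<in>UNIV - {i,j}. v $ i $ k * v $ k $ j);
     s = (\<Sum>k\<in>UNIV - {i,j}. (v $ i $ k) ^ p * (v $ k $ j) ^ p)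
   in (d * v $ i $ j) ^ p - (d * v $ i $ j + q) ^ p + s)"

lemma RR_eq:
  fixes v :: "'a::field^'n::finite^'n"
  assumes "v \<in> Xset p" "fst x \<noteq> snd x"
  shows "cf x p v * ent x v ^ p = RR x p v"
proof -
  obtain i j where x: "x = (i,j)" by force
  with assms have ij: "i \<noteq> j" by simp
  have "epow (mpow v 2) p = mpow (epow v p) 2" using assms(1) unfolding Xset_def by blast
  moreover have "mpow v 2 = v ** v" "mpow (epow v p) 2 = epow v p ** epow v p"
    by (simp_all add: numeral_2_eq_2)
  ultimately have "(epow (v ** v) p) $ i $ j = (epow v p ** epow v p) $ i $ j" by simp
  then have E: "(\<Sum>k\<in>UNIV. v $ i $ k * v $ k $ j) ^ p = (\<Sum>k\<in>UNIV. (v $ i $ k) ^ p * (v $ k $ j) ^ p)"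
    by (simp add: epow_def matrix_matrix_mult_def)
  define d where "d = v $ i $ i + v $ j $ j"
  define q where "q = (\<Sum>k\<in>UNIV - {i,j}. v $ i $ k * v $ k $ j)"
  define s where "s = (\<Sum>k\<in>UNIV - {i,j}. (v $ i $ k) ^ p * (v $ k $ j) ^ p)"
  have E2: "(d * v $ i $ j + q) ^ p = ((v $ i $ i) ^ p + (v $ j $ j) ^ p) * (v $ i $ j) ^ p + s"
    using E unfolding sum_split2[OF ij, where f = "\<lambda>k. v $ i $ k * v $ k $ j"]
      sum_split2[OF ij, where f = "\<lambda>k. (v $ i $ k) ^ p * (v $ k $ j) ^ p"] d_def q_def s_def
    by (simp add: algebra_simps)
  have "cf x p v * ent x v ^ p = d ^ p * (v $ i $ j) ^ p - ((v $ i $ i) ^ p + (v $ j $ j) ^ p) * (v $ i $ j) ^ p"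
    unfolding cf_def ent_def x d_def by (simp add: algebra_simps)
  also have "\<dots> = (d * v $ i $ j) ^ p - ((v $ i $ i) ^ p + (v $ j $ j) ^ p) * (v $ i $ j) ^ p"
    by (simp add: power_mult_distrib)
  also have "\<dots> = RR x p v"
    unfolding RR_def x Let_def using E2 unfolding d_def q_def s_def by (simp add: algebra_simps)
  finally show ?thesis .
qed

lemma RR_JJ:
  assumes "fst x \<noteq> snd x" "p \<ge> 1"
  shows "(RR x p :: ('a::field)^'n::finite^'n \<Rightarrow> 'a) \<in> JJ (Suc p)"
proof -
  obtain i j where x: "x = (i,j)" by force
  with assms have ij: "i \<noteq> j" by simp
  define A where "A = (\<lambda>v::'a^'n^'n. (v $ i $ i + v $ j $ j) * v $ i $ j)"
  define B where "B = (\<lambda>v::'a^'n^'n. \<Sum>k\<in>UNIV - {i,j}. v $ i $ k * v $ k $ j)"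
  define S where "S = (\<lambda>v::'a^'n^'n. \<Sum>k\<in>UNIV - {i,j}. (v $ i $ k) ^ p * (v $ k $ j) ^ p)"
  have A: "A \<in> JJ 1" unfolding A_def
    by (rule JJ_pmult[OF pf_add[OF pf_entry pf_entry] JJ_entry[OF ij]])
  have B: "B \<in> JJ 2" unfolding B_def
  proof (rule JJ_sum)
    fix k assume "k \<in> UNIV - {i,j}"
    then have "i \<noteq> k" "k \<noteq> j" by auto
    then show "(\<lambda>v::'a^'n^'n. v $ i $ k * v $ k $ j) \<in> JJ 2"
      using JJ_mult[OF JJ_entry JJ_entry] by (simp add: numeral_2_eq_2)
  qed simp
  have S: "S \<in> JJ (Suc p)" unfolding S_def
  proof (rule JJ_sum)
    fix k assume "k \<in> UNIV - {i,j}"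
    then have "i \<noteq> k" "k \<noteq> j" by auto
    then have "(\<lambda>v::'a^'n^'n. (v $ i $ k) ^ p * (v $ k $ j) ^ p) \<in> JJ (1 * p + 1 * p)"
      using JJ_mult[OF JJ_pow[OF JJ_entry] JJ_pow[OF JJ_entry]] by blast
    then show "(\<lambda>v::'a^'n^'n. (v $ i $ k) ^ p * (v $ k $ j) ^ p) \<in> JJ (Suc p)"
      by (rule JJ_mono[rotated]) (use assms in simp)
  qed simp
  have "RR x p = (\<lambda>v. - ((A v + B v) ^ p - A v ^ p) + S v)"
    unfolding RR_def x A_def B_def S_def Let_def by (rule ext) simp
  then show ?thesis using JJ_add[OF JJ_neg[OF JJ_powdiff[OF A B]] S] by simp
qed

lemma pf_cf: "cf x p \<in> poly_fun"
  unfolding cf_def by (intro pf_diff pf_pow pf_add pf_entry)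

lemma cf_one:
  assumes "p \<ge> 2"
  shows "cf x p (mat 1 :: ('a::field_char_0)^'n::finite^'n) \<noteq> 0"
proof -
  have "(2::nat) ^ p \<ge> 2 ^ 2" using assms by (intro power_increasing) auto
  then have ne: "(2::nat) ^ p \<noteq> 2" by simp
  have "cf x p (mat 1 :: 'a^'n^'n) = 2 ^ p - 2"
    by (simp add: cf_def mat_def)
  moreover have "(2::'a) ^ p \<noteq> 2" using ne by (metis of_nat_eq_iff of_nat_numeral of_nat_power)
  ultimately show ?thesis by simp
qed

lemma mu_replicate: "mu (replicate k x) v = ent x v ^ k"
  by (induction k) (auto simp: mu_def ent_def case_prod_beta)

lemma local_cut:
  assumes "p \<ge> 2"
  shows "\<exists>h\<in>poly_fun. h (mat 1 :: ('a::field_char_0)^'n::finite^'n) \<noteq> 0 \<and>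
     (\<forall>v\<in>Xset p. h v \<noteq> 0 \<longrightarrow> (\<forall>i j. i \<noteq> j \<longrightarrow> v $ i $ j = 0))"
proof -
  let ?O = "{x::'n \<times> 'n. fst x \<noteq> snd x}"
  define K where "K = card ?O * (p - 1) + 1"
  define c where "c = (\<lambda>v::'a^'n^'n. \<Prod>x\<in>?O. cf x p v)"
  have c: "c \<in> poly_fun" "c (mat 1) \<noteq> 0"
    unfolding c_def using cf_one[OF assms] by (auto intro!: pf_prod pf_cf)
  have "\<forall>L\<in>GG K. \<exists>j. (\<forall>M\<in>GG K. j M \<in> poly_fun \<and> j M (mat 1) = 0) \<and>
       (\<forall>v\<in>Xset p. c v * mu L v = (\<Sum>M\<in>GG K. j M v * mu M v))"
  proof
    fix L :: "('n \<times> 'n) list" assume L: "L \<in> GG K"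
    then have lenL: "length L = K" and offL: "offd L" by (auto simp: GG_def)
    obtain x where x: "fst x \<noteq> snd x" "p \<le> count_list L x"
      using pigeon[OF lenL[unfolded K_def] offL] assms by auto
    obtain L'' where L'': "length L'' = length L - p" "set L'' \<subseteq> set L"
       "\<forall>v::'a^'n^'n. mu L v = ent x v ^ p * mu L'' v"
      using mu_extract[OF x(2)] by blast
    have pK: "p \<le> K" using x(2) count_le_length[of L x] lenL by simp
    have offL'': "offd L''" using offL L''(2) by (auto simp: offd_def)
    define F where "F = (\<lambda>v::'a^'n^'n. (\<Prod>z\<in>?O - {x}. cf z p v) * (mu L'' v * RR x p v))"
    have "(\<lambda>v::'a^'n^'n. mu L'' v * RR x p v) \<in> JJ (length L'' + Suc p)"
      by (rule JJ_mult[OF JJ_mu[OF offL''] RR_JJ[OF x(1)]]) (use assms in simp)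
    moreover have "length L'' + Suc p = Suc K" using L''(1) lenL pK by simp
    ultimately have "(\<lambda>v::'a^'n^'n. mu L'' v * RR x p v) \<in> JJ (Suc K)" by simp
    then have "F \<in> JJ (Suc K)" unfolding F_def
      by (rule JJ_pmult[OF pf_prod[OF _ pf_cf], rotated]) simp
    from JJ_rep[OF this] obtain j where j: "\<forall>M\<in>GG K. j M \<in> poly_fun \<and> j M (mat 1) = 0"
      "\<forall>v. F v = (\<Sum>M\<in>GG K. j M v * mu M v)" by blast
    have "\<forall>v\<in>Xset p. c v * mu L v = F v"
    proof
      fix v :: "'a^'n^'n" assume v: "v \<in> Xset p"
      have "c v = cf x p v * (\<Prod>z\<in>?O - {x}. cf z p v)"
        unfolding c_def using x(1) by (subst prod.remove[of _ x]) auto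
      then have "c v * mu L v = (\<Prod>z\<in>?O - {x}. cf z p v) * (mu L'' v * (cf x p v * ent x v ^ p))"
        using L''(3) by (simp add: mult_ac)
      then show "c v * mu L v = F v" unfolding F_def RR_eq[OF v x(1)] .
    qed
    then show "\<exists>j. (\<forall>M\<in>GG K. j M \<in> poly_fun \<and> j M (mat 1) = 0) \<and>
       (\<forall>v\<in>Xset p. c v * mu L v = (\<Sum>M\<in>GG K. j M v * mu M v))"
      using j by auto
  qed
  from bchoice[OF this] obtain jj where jj: "\<forall>L\<in>GG K. (\<forall>M\<in>GG K. jj L M \<in> poly_fun \<and> jj L M (mat 1) = 0) \<and>
       (\<forall>v\<in>Xset p. c v * mu L v = (\<Sum>M\<in>GG K. jj L M v * mu M v))"
    by blast
  have j1: "\<forall>a\<in>GG K. \<forall>v\<in>Xset p. c v * mu a v = (\<Sum>b\<in>GG K. jj a b v * mu b v)" using jj by blast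
  have j2: "\<forall>a\<in>GG K. \<forall>b\<in>GG K. jj a b \<in> poly_fun \<and> jj a b (mat 1) = 0" using jj by blast
  from nakayama[OF GG_finite j1 c(1) c(2) j2]
  obtain h :: "'a^'n^'n \<Rightarrow> 'a" where h: "h \<in> poly_fun" "h (mat 1) \<noteq> 0" "\<forall>L\<in>GG K. \<forall>v\<in>Xset p. h v * mu L v = 0"
    by blast
  show ?thesis
  proof (intro bexI conjI ballI impI allI)
    show "h \<in> poly_fun" "h (mat 1) \<noteq> 0" using h by auto
    fix v :: "'a^'n^'n" and i j :: 'n assume v: "v \<in> Xset p" "h v \<noteq> 0" and ij: "i \<noteq> j"
    have "replicate K (i,j) \<in> GG K" using ij by (auto simp: GG_def offd_def)
    then have "h v * mu (replicate K (i,j)) v = 0" using h(3) v(1) by blast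
    then have "h v * ent (i,j) v ^ K = 0" by (simp only: mu_replicate)
    then show "v $ i $ j = 0" using v by (simp add: ent_def)
  qed
qed

definition dg :: "('n::finite \<Rightarrow> 'a::semiring_1) \<Rightarrow> 'a^'n^'n" where
  "dg d = (\<chi> i j. if i = j then d i else 0)"

lemma sum_if_eq: "(\<Sum>k\<in>(UNIV::'n::finite set). (if i = k then f k else 0) * g k) = (f i * g i :: 'a::semiring_1)"
proof -
  have "(\<lambda>k. (if i = k then f k else 0) * g k) = (\<lambda>k. if i = k then f k * g k else 0)" by auto
  then have "(\<Sum>k\<in>(UNIV::'n set). (if i = k then f k else 0) * g k) = (\<Sum>k\<in>UNIV. if i = k then f k * g k else 0)"
    by (rule arg_cong)
  also have "\<dots> = f i * g i" by (rule trans[OF sum.delta']) simp_all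
  finally show ?thesis .
qed

lemma dg_mult: "dg d ** dg e = dg (\<lambda>i. d i * e i)"
  by (simp add: dg_def matrix_matrix_mult_def vec_eq_iff sum_if_eq)

lemma dg_one: "mat 1 = dg (\<lambda>i. 1)"
  by (simp add: dg_def mat_def vec_eq_iff)

lemma mpow_dg: "mpow (dg d) m = dg (\<lambda>i. d i ^ m)"
  by (induction m) (simp_all add: dg_one dg_mult)

lemma epow_dg: "p \<ge> 1 \<Longrightarrow> epow (dg d) p = dg (\<lambda>i. d i ^ p)"
  by (simp add: dg_def epow_def vec_eq_iff power_0_left)

lemma diag_dg: "v \<in> diag_torus \<Longrightarrow> v = dg (\<lambda>i. v $ i $ i)"
  by (auto simp: diag_torus_def dg_def vec_eq_iff)

lemma dg_invertible: "(\<forall>i. d i \<noteq> 0) \<Longrightarrow> invertible (dg (d :: 'n::finite \<Rightarrow> 'a::field))"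
  unfolding invertible_def
  by (rule exI[of _ "dg (\<lambda>i. inverse (d i))"]) (simp add: dg_mult dg_one)

lemma dg_invertible_D: "invertible (dg (d :: 'n::finite \<Rightarrow> 'a::field)) \<Longrightarrow> d i \<noteq> 0"
proof
  assume "invertible (dg d)" "d i = 0"
  then obtain B where B: "dg d ** B = mat 1" unfolding invertible_def by blast
  have "(dg d ** B) $ i $ i = d i * B $ i $ i"
    by (simp add: dg_def matrix_matrix_mult_def sum_if_eq)
  then show False using B \<open>d i = 0\<close> by (simp add: mat_def)
qed

lemma matrix_inv_dg:
  assumes "\<forall>i. d i \<noteq> 0"
  shows "matrix_inv (dg (d :: 'n::finite \<Rightarrow> 'a::field)) = dg (\<lambda>i. inverse (d i))"
  unfolding matrix_inv_def
proof (rule some_equality)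
  show "dg d ** dg (\<lambda>i. inverse (d i)) = mat 1 \<and> dg (\<lambda>i. inverse (d i)) ** dg d = mat 1"
    using assms by (simp add: dg_mult dg_one)
  fix A' assume A': "dg d ** A' = mat 1 \<and> A' ** dg d = mat 1"
  have "A' = A' ** (dg d ** dg (\<lambda>i. inverse (d i)))" using assms by (simp add: dg_mult dg_one[symmetric])
  also have "\<dots> = (A' ** dg d) ** dg (\<lambda>i. inverse (d i))" by (simp add: matrix_mul_assoc)
  finally show "A' = dg (\<lambda>i. inverse (d i))" using A' by simp
qed

lemma torus_sub_X:
  assumes "p \<ge> 1"
  shows "(diag_torus :: ('a::field^'n::finite^'n) set) \<subseteq> Xset p"
proof
  fix v :: "'a^'n^'n" assume v: "v \<in> diag_torus"
  define d where "d = (\<lambda>i. v $ i $ i)"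
  have vd: "v = dg d" using diag_dg[OF v] d_def by simp
  have GLv: "v \<in> GL" using v by (simp add: diag_torus_def)
  then have nz: "\<forall>i. d i \<noteq> 0" using dg_invertible_D vd by (auto simp: GL_def)
  have 1: "\<forall>m. epow (mpow v m) p = mpow (epow v p) m"
    using assms by (simp add: vd mpow_dg epow_dg power_mult[symmetric] mult.commute)
  have 2: "\<forall>m. epow (mpow v m) p ** epow (mpow (matrix_inv v) m) p = mat 1"
  proof
    fix m
    show "epow (mpow v m) p ** epow (mpow (matrix_inv v) m) p = mat 1"
      using assms nz by (simp add: vd matrix_inv_dg mpow_dg epow_dg dg_mult dg_one
        power_mult_distrib[symmetric] power_inverse[symmetric])
  qed
  show "v \<in> Xset p" using GLv 1 2 by (simp add: Xset_def)
qed

lemma one_torus: "(mat 1 :: ('a::field^'n::finite^'n)) \<in> diag_torus"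
  by (auto simp: diag_torus_def GL_def dg_one intro!: dg_invertible) (simp add: dg_def)

lemma poly_line:
  fixes a b :: "'a::field^'n::finite^'n"
  assumes "f \<in> poly_fun"
  shows "\<exists>q. \<forall>t. poly q t = f (\<chi> i j. a $ i $ j + t * (b $ i $ j - a $ i $ j))"
  using assms
proof (induction rule: poly_fun.induct)
  case (const c) then show ?case by (intro exI[of _ "[:c:]"]) simp
next
  case (entry i j) then show ?case
    by (intro exI[of _ "[:a $ i $ j, b $ i $ j - a $ i $ j:]"]) (simp add: algebra_simps)
next
  case (add f g)
  then obtain q1 q2 where "\<forall>t. poly q1 t = f (\<chi> i j. a $ i $ j + t * (b $ i $ j - a $ i $ j))"
    "\<forall>t. poly q2 t = g (\<chi> i j. a $ i $ j + t * (b $ i $ j - a $ i $ j))" by blast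
  then show ?case by (intro exI[of _ "q1 + q2"]) simp
next
  case (mult f g)
  then obtain q1 q2 where "\<forall>t. poly q1 t = f (\<chi> i j. a $ i $ j + t * (b $ i $ j - a $ i $ j))"
    "\<forall>t. poly q2 t = g (\<chi> i j. a $ i $ j + t * (b $ i $ j - a $ i $ j))" by blast
  then show ?case by (intro exI[of _ "q1 * q2"]) simp
qed

lemma torus_closed: "zariski_closed_GL (diag_torus :: ('a::field^'n::finite^'n) set)"
  unfolding zariski_closed_GL_def
proof (intro exI conjI)
  let ?S = "{f. \<exists>i j. i \<noteq> j \<and> f = (\<lambda>v::'a^'n^'n. v $ i $ j)}"
  show "?S \<subseteq> poly_fun" using pf_entry by blast
  show "diag_torus = {v \<in> GL. \<forall>f\<in>?S. f v = 0}" unfolding diag_torus_def by auto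
qed

lemma zero_closed: "h \<in> poly_fun \<Longrightarrow> zariski_closed_GL {v \<in> GL. h v = 0}"
  unfolding zariski_closed_GL_def by (intro exI[of _ "{h}"]) auto

lemma torus_irreducible:
  shows "zariski_irreducible (diag_torus :: ('a::field_char_0^'n::finite^'n) set)"
  unfolding zariski_irreducible_def
proof (intro conjI allI impI)
  show "diag_torus \<subseteq> GL" by (auto simp: diag_torus_def)
  show "diag_torus \<noteq> {}" using one_torus by blast
  fix A B :: "('a^'n^'n) set"
  assume cA: "zariski_closed_GL A" and cB: "zariski_closed_GL B" and sub: "diag_torus \<subseteq> A \<union> B"
  show "diag_torus \<subseteq> A \<or> diag_torus \<subseteq> B"
  proof (rule ccontr)
    assume "\<not> ?thesis"
    then obtain a b where a: "a \<in> diag_torus" "a \<notin> A" and b: "b \<in> diag_torus" "b \<notin> B" by blast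
    obtain SA where SA: "SA \<subseteq> poly_fun" "A = {v \<in> GL. \<forall>f\<in>SA. f v = 0}"
      using cA unfolding zariski_closed_GL_def by blast
    obtain SB where SB: "SB \<subseteq> poly_fun" "B = {v \<in> GL. \<forall>f\<in>SB. f v = 0}"
      using cB unfolding zariski_closed_GL_def by blast
    have aGL: "a \<in> GL" and bGL: "b \<in> GL" using a b by (auto simp: diag_torus_def)
    obtain f where f: "f \<in> SA" "f a \<noteq> 0" using a(2) aGL SA(2) by blast
    obtain g where g: "g \<in> SB" "g b \<noteq> 0" using b(2) bGL SB(2) by blast
    define w where "w = (\<lambda>t::'a. (\<chi> i j. a $ i $ j + t * (b $ i $ j - a $ i $ j)) :: 'a^'n^'n)"
    obtain qf where qf: "\<forall>t. poly qf t = f (w t)" using poly_line[of f a b] f SA(1) unfolding w_def by blast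
    obtain qg where qg: "\<forall>t. poly qg t = g (w t)" using poly_line[of g a b] g SB(1) unfolding w_def by blast
    define ql where "ql = (\<lambda>i. [:a $ i $ i, b $ i $ i - a $ i $ i:])"
    have anz: "a $ i $ i \<noteq> 0" for i
      using dg_invertible_D[of "\<lambda>i. a $ i $ i" i] diag_dg[OF a(1)] aGL by (simp add: GL_def)
    have qfnz: "qf \<noteq> 0"
    proof
      assume "qf = 0"
      then have "f (w 0) = 0" using qf by simp
      moreover have "w 0 = a" by (simp add: w_def vec_eq_iff)
      ultimately show False using f by simp
    qed
    have qgnz: "qg \<noteq> 0"
    proof
      assume "qg = 0"
      then have "g (w 1) = 0" using qg by simp
      moreover have "w 1 = b" by (simp add: w_def vec_eq_iff)
      ultimately show False using g by simp
    qed
    have qlnz: "ql i \<noteq> 0" for i using anz[of i] by (simp add: ql_def)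
    define Q where "Q = qf * qg * (\<Prod>i\<in>UNIV. ql i)"
    have "Q \<noteq> 0" unfolding Q_def using qfnz qgnz qlnz by (simp add: prod_zero_iff)
    then have fin: "finite {t. poly Q t = 0}" by (rule poly_roots_finite)
    have "\<exists>t. t \<notin> {t. poly Q t = 0}"
    proof (rule ccontr)
      assume "\<nexists>t. t \<notin> {t. poly Q t = 0}"
      then have "{t. poly Q t = 0} = UNIV" by auto
      then show False using fin infinite_UNIV_char_0[where 'a='a] by simp
    qed
    then obtain t where t: "poly Q t \<noteq> 0" by blast
    have ft: "f (w t) \<noteq> 0" and gt: "g (w t) \<noteq> 0" and lt: "\<And>i. poly (ql i) t \<noteq> 0"
      using t qf qg by (auto simp: Q_def poly_prod prod_zero_iff)
    have offd_w: "w t $ i $ j = 0" if "i \<noteq> j" for i j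
      using a(1) b(1) that by (simp add: w_def diag_torus_def)
    have diag_w: "w t $ i $ i \<noteq> 0" for i using lt[of i] by (simp add: w_def ql_def algebra_simps)
    have "w t = dg (\<lambda>i. w t $ i $ i)" using offd_w by (auto simp: dg_def vec_eq_iff)
    then have "w t \<in> GL" using dg_invertible[of "\<lambda>i. w t $ i $ i"] diag_w by (simp add: GL_def)
    then have "w t \<in> diag_torus" using offd_w by (simp add: diag_torus_def)
    then have "w t \<in> A \<or> w t \<in> B" using sub by blast
    then show False using f g ft gt SA(2) SB(2) by blast
  qed
qed

lemma comp_sub_torus:
  fixes Y :: "('a::field_char_0^'n::finite^'n) set"
  assumes "p \<ge> 2" "Y \<subseteq> Xset p" "zariski_irreducible Y" "mat 1 \<in> Y"
  shows "Y \<subseteq> diag_torus"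
proof -
  obtain h :: "'a^'n^'n \<Rightarrow> 'a" where h: "h \<in> poly_fun" "h (mat 1) \<noteq> 0"
    "\<forall>v\<in>Xset p. h v \<noteq> 0 \<longrightarrow> (\<forall>i j. i \<noteq> j \<longrightarrow> v $ i $ j = 0)"
    using local_cut[OF assms(1)] by blast
  have XGL: "Xset p \<subseteq> GL" by (auto simp: Xset_def)
  have "Y \<subseteq> diag_torus \<union> {v \<in> GL. h v = 0}"
    using assms(2) XGL h(3) by (auto simp: diag_torus_def)
  then have "Y \<subseteq> diag_torus \<or> Y \<subseteq> {v \<in> GL. h v = 0}"
    using assms(3) torus_closed zero_closed[OF h(1)] unfolding zariski_irreducible_def by blast
  then show ?thesis using assms(4) h(2) by blast
qed

theorem lemma3p13:
  fixes p :: nat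
  assumes "alg_closed TYPE('a::field_char_0)"
    and "uncountable (UNIV :: 'a set)"
    and "p \<ge> 2"
  shows "{Z :: ('a ^'n::finite^'n) set. irreducible_component (Xset p) Z \<and> mat 1 \<in> Z}
           = {diag_torus}"
proof -
  have TX: "(diag_torus :: ('a^'n^'n) set) \<subseteq> Xset p" by (rule torus_sub_X) (use assms(3) in simp)
  have Tcomp: "irreducible_component (Xset p) (diag_torus :: ('a^'n^'n) set)"
    unfolding irreducible_component_def
  proof (intro conjI allI impI)
    show "(diag_torus :: (('a^'n^'n) set)) \<subseteq> Xset p" by (rule TX)
    show "zariski_irreducible (diag_torus :: ('a^'n^'n) set)" by (rule torus_irreducible)
    fix Y :: "('a^'n^'n) set" assume "Y \<subseteq> Xset p" "zariski_irreducible Y" "diag_torus \<subseteq> Y"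
    moreover then have "Y \<subseteq> diag_torus" using comp_sub_torus[OF assms(3)] one_torus by blast
    ultimately show "Y = diag_torus" by blast
  qed
  show ?thesis
  proof (intro set_eqI iffI)
    fix Z :: "('a^'n^'n) set"
    assume "Z \<in> {Z. irreducible_component (Xset p) Z \<and> mat 1 \<in> Z}"
    then have Z: "irreducible_component (Xset p) Z" "mat 1 \<in> Z" by auto
    then have "Z \<subseteq> diag_torus" using comp_sub_torus[OF assms(3)]
      unfolding irreducible_component_def by blast
    then show "Z \<in> {diag_torus}" using Z(1) TX torus_irreducible
      unfolding irreducible_component_def by blast
  next
    fix Z :: "('a^'n^'n) set"
    assume "Z \<in> {diag_torus}"
    then show "Z \<in> {Z. irreducible_component (Xset p) Z \<and> mat 1 \<in> Z}"
      using Tcomp one_torus by auto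
  qed
qed

end
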